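(* Let $\mathcal{M}$ be an $n$-abelian category and consider a commutative diagram in $\mathcal{M}$ with rows $X^0\xrightarrow{d_X^0}X^1\xrightarrow{d_X^1}X^2\xrightarrow{d_X^2}X^3\xrightarrow{d_X^3}X^4$ and $Y^0\xrightarrow{d_Y^0}Y^1\xrightarrow{d_Y^1}Y^2\xrightarrow{d_Y^2}Y^3\xrightarrow{d_Y^3}Y^4$ and vertical morphisms $f^i:X^i\to Y^i$ ($0\le i\le4$). Suppose $f^1$ and $f^3$ are isomorphisms, $f^0$ is an epimorphism, $f^4$ is a monomorphism, and one of the following holds: (i) for $i=1,2,3$, $d_X^i$ is a weak cokernel of $d_X^{i-1}$ and $d_Y^i$ is a weak cokernel of $d_Y^{i-1}$; or (ii) for $i=0,1,2$, $d_X^i$ is a weak kernel of $d_X^{i+1}$ and $d_Y^i$ is a weak kernel of $d_Y^{i+1}$. Then $f^2$ is an isomorphism.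
   Context: A weak cokernel of $f:A\to B$ is a morphism $g:B\to C$ such that $\mathcal{M}(C,W)\to\mathcal{M}(B,W)\to\mathcal{M}(A,W)$ is exact for all $W$; a weak kernel of $g:B\to C$ is a morphism $f:A\to B$ such that $\mathcal{M}(W,A)\to\mathcal{M}(W,B)\to\mathcal{M}(W,C)$ is exact for all $W$. An $n$-abelian category is an idempotent complete additive category in which every morphism has an $n$-kernel and an $n$-cokernel, and in which every monomorphism (resp. epimorphism) together with any of its $n$-cokernels (resp. $n$-kernels) forms an $n$-exact sequence (here $n$-kernel/$n$-cokernel and $n$-exact are in the sense of Jasso: $X^0\to\cdots\to X^{n+1}$ is $n$-exact if $0\to\mathcal{M}(X^{n+1},W)\to\cdots\to\mathcal{M}(X^0,W)$ and $0\to\mathcal{M}(W,X^0)\to\cdots\to\mathcal{M}(W,X^{n+1})$ are exact for all $W$). *)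

theory Defs
  imports Main
begin

text \<open>A (small-or-large) category given in arrow-only style, together with
  the data of an additive structure on the hom-sets.
  cmp g f denotes the composite g after f.\<close>

record ('o, 'm) catdata =
  Ob  :: "'o set"
  Ar  :: "'m set"
  Src :: "'m \<Rightarrow> 'o"
  Tgt :: "'m \<Rightarrow> 'o"
  cmp :: "'m \<Rightarrow> 'm \<Rightarrow> 'm"
  idt :: "'o \<Rightarrow> 'm"
  pls :: "'m \<Rightarrow> 'm \<Rightarrow> 'm"
  zer :: "'o \<Rightarrow> 'o \<Rightarrow> 'm"
  ngt :: "'m \<Rightarrow> 'm"

definition hom :: "('o, 'm) catdata \<Rightarrow> 'o \<Rightarrow> 'o \<Rightarrow> 'm set" where
  "hom C A B = {f \<in> Ar C. Src C f = A \<and> Tgt C f = B}"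

definition is_category :: "('o, 'm) catdata \<Rightarrow> bool" where
  "is_category C \<longleftrightarrow>
     (\<forall>f\<in>Ar C. Src C f \<in> Ob C \<and> Tgt C f \<in> Ob C) \<and>
     (\<forall>A\<in>Ob C. idt C A \<in> hom C A A) \<and>
     (\<forall>f\<in>Ar C. \<forall>g\<in>Ar C. Tgt C f = Src C g \<longrightarrow>
        cmp C g f \<in> hom C (Src C f) (Tgt C g)) \<and>
     (\<forall>f\<in>Ar C. cmp C f (idt C (Src C f)) = f \<and> cmp C (idt C (Tgt C f)) f = f) \<and>
     (\<forall>f\<in>Ar C. \<forall>g\<in>Ar C. \<forall>h\<in>Ar C. Tgt C f = Src C g \<longrightarrow> Tgt C g = Src C h \<longrightarrow>
        cmp C h (cmp C g f) = cmp C (cmp C h g) f)"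

definition is_preadditive :: "('o, 'm) catdata \<Rightarrow> bool" where
  "is_preadditive C \<longleftrightarrow> is_category C \<and>
     (\<forall>A\<in>Ob C. \<forall>B\<in>Ob C.
        zer C A B \<in> hom C A B \<and>
        (\<forall>f\<in>hom C A B. \<forall>g\<in>hom C A B. pls C f g \<in> hom C A B) \<and>
        (\<forall>f\<in>hom C A B. ngt C f \<in> hom C A B) \<and>
        (\<forall>f\<in>hom C A B. \<forall>g\<in>hom C A B. \<forall>h\<in>hom C A B.
           pls C (pls C f g) h = pls C f (pls C g h)) \<and>
        (\<forall>f\<in>hom C A B. \<forall>g\<in>hom C A B. pls C f g = pls C g f) \<and>
        (\<forall>f\<in>hom C A B. pls C f (zer C A B) = f) \<and>
        (\<forall>f\<in>hom C A B. pls C f (ngt C f) = zer C A B)) \<and>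
     (\<forall>A\<in>Ob C. \<forall>B\<in>Ob C. \<forall>D\<in>Ob C.
        (\<forall>f\<in>hom C A B. \<forall>f'\<in>hom C A B. \<forall>g\<in>hom C B D.
           cmp C g (pls C f f') = pls C (cmp C g f) (cmp C g f')) \<and>
        (\<forall>f\<in>hom C A B. \<forall>g\<in>hom C B D. \<forall>g'\<in>hom C B D.
           cmp C (pls C g g') f = pls C (cmp C g f) (cmp C g' f)))"

definition is_additive :: "('o, 'm) catdata \<Rightarrow> bool" where
  "is_additive C \<longleftrightarrow> is_preadditive C \<and>
     (\<exists>Z\<in>Ob C. \<forall>A\<in>Ob C. hom C Z A = {zer C Z A} \<and> hom C A Z = {zer C A Z}) \<and>
     (\<forall>A\<in>Ob C. \<forall>B\<in>Ob C. \<exists>P\<in>Ob C. \<exists>i1\<in>hom C A P. \<exists>i2\<in>hom C B P.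
        \<exists>p1\<in>hom C P A. \<exists>p2\<in>hom C P B.
          cmp C p1 i1 = idt C A \<and> cmp C p2 i2 = idt C B \<and>
          cmp C p1 i2 = zer C B A \<and> cmp C p2 i1 = zer C A B \<and>
          pls C (cmp C i1 p1) (cmp C i2 p2) = idt C P)"

definition idempotent_complete :: "('o, 'm) catdata \<Rightarrow> bool" where
  "idempotent_complete C \<longleftrightarrow>
     (\<forall>A\<in>Ob C. \<forall>e\<in>hom C A A. cmp C e e = e \<longrightarrow>
        (\<exists>B\<in>Ob C. \<exists>r\<in>hom C A B. \<exists>s\<in>hom C B A. cmp C s r = e \<and> cmp C r s = idt C B))"

definition mono :: "('o, 'm) catdata \<Rightarrow> 'm \<Rightarrow> bool" where
  "mono C f \<longleftrightarrow> f \<in> Ar C \<and>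
     (\<forall>W\<in>Ob C. \<forall>u\<in>hom C W (Src C f). \<forall>v\<in>hom C W (Src C f).
        cmp C f u = cmp C f v \<longrightarrow> u = v)"

definition epi :: "('o, 'm) catdata \<Rightarrow> 'm \<Rightarrow> bool" where
  "epi C f \<longleftrightarrow> f \<in> Ar C \<and>
     (\<forall>W\<in>Ob C. \<forall>u\<in>hom C (Tgt C f) W. \<forall>v\<in>hom C (Tgt C f) W.
        cmp C u f = cmp C v f \<longrightarrow> u = v)"

definition iso :: "('o, 'm) catdata \<Rightarrow> 'm \<Rightarrow> bool" where
  "iso C f \<longleftrightarrow> f \<in> Ar C \<and>
     (\<exists>g\<in>hom C (Tgt C f) (Src C f).
        cmp C g f = idt C (Src C f) \<and> cmp C f g = idt C (Tgt C f))"

text \<open>Exactness of 0 \<rightarrow> M(W,X^0) \<rightarrow> ... \<rightarrow> M(W,X^k) (maps d i : X i \<rightarrow> X (i+1), i<k).\<close>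

definition cov_exact :: "('o, 'm) catdata \<Rightarrow> 'o \<Rightarrow> (nat \<Rightarrow> 'o) \<Rightarrow> (nat \<Rightarrow> 'm) \<Rightarrow> nat \<Rightarrow> bool" where
  "cov_exact C W X d k \<longleftrightarrow>
     (\<forall>u\<in>hom C W (X 0). cmp C (d 0) u = zer C W (X 1) \<longrightarrow> u = zer C W (X 0)) \<and>
     (\<forall>i. 1 \<le> i \<and> i < k \<longrightarrow>
        (\<forall>u\<in>hom C W (X i). cmp C (d i) u = zer C W (X (Suc i)) \<longleftrightarrow>
           (\<exists>v\<in>hom C W (X (i - 1)). u = cmp C (d (i - 1)) v)))"

text \<open>Exactness of 0 \<rightarrow> M(X^k,W) \<rightarrow> ... \<rightarrow> M(X^0,W).\<close>

definition contra_exact :: "('o, 'm) catdata \<Rightarrow> 'o \<Rightarrow> (nat \<Rightarrow> 'o) \<Rightarrow> (nat \<Rightarrow> 'm) \<Rightarrow> nat \<Rightarrow> bool" where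
  "contra_exact C W X d k \<longleftrightarrow>
     (\<forall>u\<in>hom C (X k) W. cmp C u (d (k - 1)) = zer C (X (k - 1)) W \<longrightarrow> u = zer C (X k) W) \<and>
     (\<forall>i. 1 \<le> i \<and> i < k \<longrightarrow>
        (\<forall>u\<in>hom C (X i) W. cmp C u (d (i - 1)) = zer C (X (i - 1)) W \<longleftrightarrow>
           (\<exists>v\<in>hom C (X (Suc i)) W. u = cmp C v (d i))))"

definition nseq :: "('o, 'm) catdata \<Rightarrow> nat \<Rightarrow> (nat \<Rightarrow> 'o) \<Rightarrow> (nat \<Rightarrow> 'm) \<Rightarrow> bool" where
  "nseq C n X d \<longleftrightarrow> (\<forall>i\<le>Suc n. X i \<in> Ob C) \<and> (\<forall>i\<le>n. d i \<in> hom C (X i) (X (Suc i)))"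

text \<open>(d 0, ..., d (n-1)) is an n-kernel of d n (Jasso).\<close>

definition n_kernel :: "('o, 'm) catdata \<Rightarrow> nat \<Rightarrow> (nat \<Rightarrow> 'o) \<Rightarrow> (nat \<Rightarrow> 'm) \<Rightarrow> bool" where
  "n_kernel C n X d \<longleftrightarrow> nseq C n X d \<and> (\<forall>W\<in>Ob C. cov_exact C W X d (Suc n))"

text \<open>(d 1, ..., d n) is an n-cokernel of d 0 (Jasso).\<close>

definition n_cokernel :: "('o, 'm) catdata \<Rightarrow> nat \<Rightarrow> (nat \<Rightarrow> 'o) \<Rightarrow> (nat \<Rightarrow> 'm) \<Rightarrow> bool" where
  "n_cokernel C n X d \<longleftrightarrow> nseq C n X d \<and> (\<forall>W\<in>Ob C. contra_exact C W X d (Suc n))"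

definition n_exact :: "('o, 'm) catdata \<Rightarrow> nat \<Rightarrow> (nat \<Rightarrow> 'o) \<Rightarrow> (nat \<Rightarrow> 'm) \<Rightarrow> bool" where
  "n_exact C n X d \<longleftrightarrow> nseq C n X d \<and>
     (\<forall>W\<in>Ob C. cov_exact C W X d (Suc n) \<and> contra_exact C W X d (Suc n))"

definition n_abelian :: "('o, 'm) catdata \<Rightarrow> nat \<Rightarrow> bool" where
  "n_abelian C n \<longleftrightarrow> 0 < n \<and> is_additive C \<and> idempotent_complete C \<and>
     (\<forall>f\<in>Ar C. \<exists>X d. X n = Src C f \<and> X (Suc n) = Tgt C f \<and> d n = f \<and> n_kernel C n X d) \<and>
     (\<forall>f\<in>Ar C. \<exists>X d. X 0 = Src C f \<and> X 1 = Tgt C f \<and> d 0 = f \<and> n_cokernel C n X d) \<and>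
     (\<forall>X d. mono C (d 0) \<and> n_cokernel C n X d \<longrightarrow> n_exact C n X d) \<and>
     (\<forall>X d. epi C (d n) \<and> n_kernel C n X d \<longrightarrow> n_exact C n X d)"

definition weak_cokernel :: "('o, 'm) catdata \<Rightarrow> 'm \<Rightarrow> 'm \<Rightarrow> bool" where
  "weak_cokernel C f g \<longleftrightarrow> f \<in> Ar C \<and> g \<in> Ar C \<and> Tgt C f = Src C g \<and>
     (\<forall>W\<in>Ob C. \<forall>h\<in>hom C (Src C g) W.
        cmp C h f = zer C (Src C f) W \<longleftrightarrow> (\<exists>k\<in>hom C (Tgt C g) W. h = cmp C k g))"

text \<open>f is a weak kernel of g.\<close>

definition weak_kernel :: "('o, 'm) catdata \<Rightarrow> 'm \<Rightarrow> 'm \<Rightarrow> bool" where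
  "weak_kernel C g f \<longleftrightarrow> f \<in> Ar C \<and> g \<in> Ar C \<and> Tgt C f = Src C g \<and>
     (\<forall>W\<in>Ob C. \<forall>h\<in>hom C W (Src C g).
        cmp C g h = zer C W (Tgt C g) \<longleftrightarrow> (\<exists>k\<in>hom C W (Src C f). h = cmp C f k))"

end

theory Submission
  imports Defs
begin


context fixes C :: "('o,'m) catdata" assumes P: "is_preadditive C"
begin

lemma cat: "is_category C" using P unfolding is_preadditive_def by blast

lemma hom_iff: "f \<in> hom C A B \<longleftrightarrow> f \<in> Ar C \<and> Src C f = A \<and> Tgt C f = B"
  by (simp add: hom_def)

lemma Src_Ob: "f \<in> Ar C \<Longrightarrow> Src C f \<in> Ob C" using cat unfolding is_category_def by blast
lemma Tgt_Ob: "f \<in> Ar C \<Longrightarrow> Tgt C f \<in> Ob C" using cat unfolding is_category_def by blast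

lemma comp_Ar: "f \<in> Ar C \<Longrightarrow> g \<in> Ar C \<Longrightarrow> Tgt C f = Src C g \<Longrightarrow> cmp C g f \<in> Ar C"
  using cat unfolding is_category_def hom_def by blast
lemma comp_Src: "f \<in> Ar C \<Longrightarrow> g \<in> Ar C \<Longrightarrow> Tgt C f = Src C g \<Longrightarrow> Src C (cmp C g f) = Src C f"
  using cat unfolding is_category_def hom_def by blast
lemma comp_Tgt: "f \<in> Ar C \<Longrightarrow> g \<in> Ar C \<Longrightarrow> Tgt C f = Src C g \<Longrightarrow> Tgt C (cmp C g f) = Tgt C g"
  using cat unfolding is_category_def hom_def by blast
lemma assoc: "f \<in> Ar C \<Longrightarrow> g \<in> Ar C \<Longrightarrow> h \<in> Ar C \<Longrightarrow> Tgt C f = Src C g \<Longrightarrow> Tgt C g = Src C h \<Longrightarrow>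
   cmp C (cmp C h g) f = cmp C h (cmp C g f)"
  using cat unfolding is_category_def by metis
lemma assoc_hom: "f \<in> hom C A B \<Longrightarrow> g \<in> hom C B D \<Longrightarrow> h \<in> hom C D E \<Longrightarrow>
   cmp C (cmp C h g) f = cmp C h (cmp C g f)"
  using assoc by (simp add: hom_iff)
lemma id_l: "f \<in> Ar C \<Longrightarrow> Tgt C f = B \<Longrightarrow> cmp C (idt C B) f = f"
  using cat unfolding is_category_def by blast
lemma id_r: "f \<in> Ar C \<Longrightarrow> Src C f = A \<Longrightarrow> cmp C f (idt C A) = f"
  using cat unfolding is_category_def by blast
lemma id_hom: "A \<in> Ob C \<Longrightarrow> idt C A \<in> hom C A A"
  using cat unfolding is_category_def by blast

lemma zer_hom: "A \<in> Ob C \<Longrightarrow> B \<in> Ob C \<Longrightarrow> zer C A B \<in> hom C A B"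
  using P unfolding is_preadditive_def by blast
lemma pls_hom: "f \<in> hom C A B \<Longrightarrow> g \<in> hom C A B \<Longrightarrow> pls C f g \<in> hom C A B"
  using P Src_Ob Tgt_Ob unfolding is_preadditive_def hom_def by blast
lemma ngt_hom: "f \<in> hom C A B \<Longrightarrow> ngt C f \<in> hom C A B"
  using P Src_Ob Tgt_Ob unfolding is_preadditive_def hom_def by blast
lemma pls_assoc: "f \<in> hom C A B \<Longrightarrow> g \<in> hom C A B \<Longrightarrow> h \<in> hom C A B \<Longrightarrow>
  pls C (pls C f g) h = pls C f (pls C g h)"
  using P Src_Ob Tgt_Ob unfolding is_preadditive_def hom_def by blast
lemma pls_comm: "f \<in> hom C A B \<Longrightarrow> g \<in> hom C A B \<Longrightarrow> pls C f g = pls C g f"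
  using P Src_Ob Tgt_Ob unfolding is_preadditive_def hom_def by blast
lemma pls_zer: "f \<in> hom C A B \<Longrightarrow> pls C f (zer C A B) = f"
  using P Src_Ob Tgt_Ob unfolding is_preadditive_def hom_def by blast
lemma pls_ngt: "f \<in> hom C A B \<Longrightarrow> pls C f (ngt C f) = zer C A B"
  using P Src_Ob Tgt_Ob unfolding is_preadditive_def hom_def by blast
lemma dist_l: "f \<in> hom C A B \<Longrightarrow> f' \<in> hom C A B \<Longrightarrow> g \<in> hom C B D \<Longrightarrow>
  cmp C g (pls C f f') = pls C (cmp C g f) (cmp C g f')"
proof -
  assume a: "f \<in> hom C A B" "f' \<in> hom C A B" "g \<in> hom C B D"
  then have "A \<in> Ob C" "B \<in> Ob C" "D \<in> Ob C" using Src_Ob Tgt_Ob hom_iff by auto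
  then show ?thesis using P a unfolding is_preadditive_def by blast
qed
lemma dist_r: "f \<in> hom C A B \<Longrightarrow> g \<in> hom C B D \<Longrightarrow> g' \<in> hom C B D \<Longrightarrow>
  cmp C (pls C g g') f = pls C (cmp C g f) (cmp C g' f)"
proof -
  assume a: "f \<in> hom C A B" "g \<in> hom C B D" "g' \<in> hom C B D"
  then have "A \<in> Ob C" "B \<in> Ob C" "D \<in> Ob C" using Src_Ob Tgt_Ob hom_iff by auto
  have "\<forall>A\<in>Ob C. \<forall>B\<in>Ob C. \<forall>D\<in>Ob C. (\<forall>f\<in>hom C A B. \<forall>g\<in>hom C B D. \<forall>g'\<in>hom C B D.
           cmp C (pls C g g') f = pls C (cmp C g f) (cmp C g' f))"
    using P[unfolded is_preadditive_def, THEN conjunct2, THEN conjunct2] by fast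
  from this[rule_format, OF \<open>A \<in> Ob C\<close> \<open>B \<in> Ob C\<close> \<open>D \<in> Ob C\<close> a(1) a(2) a(3)] show ?thesis .
qed

lemma comp_hom: "f \<in> hom C A B \<Longrightarrow> g \<in> hom C B D \<Longrightarrow> cmp C g f \<in> hom C A D"
  using comp_Ar comp_Src comp_Tgt hom_iff by auto

lemma zer_pls: "f \<in> hom C A B \<Longrightarrow> pls C (zer C A B) f = f"
  by (metis pls_comm pls_zer zer_hom hom_iff Src_Ob Tgt_Ob)

lemma neg_unique: "a \<in> hom C A B \<Longrightarrow> b \<in> hom C A B \<Longrightarrow> pls C a b = zer C A B \<Longrightarrow> b = ngt C a"
proof -
  assume a: "a \<in> hom C A B" "b \<in> hom C A B" "pls C a b = zer C A B"
  have "b = pls C b (pls C a (ngt C a))" using a pls_ngt pls_zer by simp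
  also have "\<dots> = pls C (pls C b a) (ngt C a)" using a ngt_hom pls_assoc by simp
  also have "\<dots> = pls C (zer C A B) (ngt C a)" using a pls_comm by simp
  also have "\<dots> = ngt C a" using a ngt_hom zer_pls by simp
  finally show ?thesis .
qed

lemma diff_zero: "a \<in> hom C A B \<Longrightarrow> b \<in> hom C A B \<Longrightarrow> pls C a (ngt C b) = zer C A B \<Longrightarrow> a = b"
proof -
  assume a: "a \<in> hom C A B" "b \<in> hom C A B" "pls C a (ngt C b) = zer C A B"
  have nb: "ngt C b \<in> hom C A B" using a ngt_hom by simp
  have "pls C (ngt C b) b = zer C A B" using pls_comm[OF nb a(2)] pls_ngt a by simp
  then have "a = pls C a (pls C (ngt C b) b)" using a pls_zer by simp
  also have "\<dots> = pls C (pls C a (ngt C b)) b" using pls_assoc[OF a(1) nb a(2)] by simp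
  also have "\<dots> = b" using a(3) zer_pls[OF a(2)] by simp
  finally show ?thesis .
qed

lemma pls_ngt_cancel: "a \<in> hom C A B \<Longrightarrow> q \<in> hom C A B \<Longrightarrow> pls C (pls C a (ngt C q)) q = a"
proof -
  assume a: "a \<in> hom C A B" "q \<in> hom C A B"
  have nq: "ngt C q \<in> hom C A B" using a ngt_hom by simp
  have "pls C (pls C a (ngt C q)) q = pls C a (pls C (ngt C q) q)" using pls_assoc[OF a(1) nq a(2)] .
  also have "pls C (ngt C q) q = zer C A B" using pls_comm[OF nq a(2)] pls_ngt a by simp
  finally show ?thesis using pls_zer a by simp
qed

lemma cmp_zer_l: "f \<in> hom C A B \<Longrightarrow> D \<in> Ob C \<Longrightarrow> cmp C (zer C B D) f = zer C A D"
proof -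
  assume a: "f \<in> hom C A B" "D \<in> Ob C"
  have AB: "A \<in> Ob C" "B \<in> Ob C" using a Src_Ob Tgt_Ob hom_iff by auto
  define z where "z = zer C B D"
  have zh: "z \<in> hom C B D" using zer_hom AB a z_def by simp
  define q where "q = cmp C z f"
  have qh: "q \<in> hom C A D" using comp_hom a zh q_def by simp
  have "q = cmp C (pls C z z) f" using pls_zer zh z_def q_def by simp
  also have "\<dots> = pls C q q" using dist_r a zh q_def by simp
  finally have qq: "q = pls C q q" .
  have "zer C A D = pls C q (ngt C q)" using pls_ngt qh by simp
  also have "\<dots> = pls C (pls C q q) (ngt C q)" using qq by simp
  also have "\<dots> = pls C q (pls C q (ngt C q))" using pls_assoc qh ngt_hom by simp
  also have "\<dots> = q" using pls_ngt pls_zer qh by simp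
  finally show ?thesis using q_def z_def by simp
qed

lemma cmp_zer_r: "g \<in> hom C B D \<Longrightarrow> A \<in> Ob C \<Longrightarrow> cmp C g (zer C A B) = zer C A D"
proof -
  assume a: "g \<in> hom C B D" "A \<in> Ob C"
  have AB: "D \<in> Ob C" "B \<in> Ob C" using a Src_Ob Tgt_Ob hom_iff by auto
  define z where "z = zer C A B"
  have zh: "z \<in> hom C A B" using zer_hom AB a z_def by simp
  define q where "q = cmp C g z"
  have qh: "q \<in> hom C A D" using comp_hom a zh q_def by simp
  have "q = cmp C g (pls C z z)" using pls_zer zh z_def q_def by simp
  also have "\<dots> = pls C q q" using dist_l a zh q_def by simp
  finally have qq: "q = pls C q q" .
  have "zer C A D = pls C q (ngt C q)" using pls_ngt qh by simp
  also have "\<dots> = pls C (pls C q q) (ngt C q)" using qq by simp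
  also have "\<dots> = pls C q (pls C q (ngt C q))" using pls_assoc qh ngt_hom by simp
  also have "\<dots> = q" using pls_ngt pls_zer qh by simp
  finally show ?thesis using q_def z_def by simp
qed

lemma cmp_ngt_l: "f \<in> hom C A B \<Longrightarrow> g \<in> hom C B D \<Longrightarrow> cmp C (ngt C g) f = ngt C (cmp C g f)"
proof -
  assume a: "f \<in> hom C A B" "g \<in> hom C B D"
  have D: "D \<in> Ob C" using a Tgt_Ob hom_iff by auto
  have "pls C (cmp C g f) (cmp C (ngt C g) f) = cmp C (pls C g (ngt C g)) f"
    using dist_r a ngt_hom by simp
  also have "\<dots> = zer C A D" using pls_ngt cmp_zer_l a D by simp
  finally show ?thesis using neg_unique comp_hom a ngt_hom by blast
qed

lemma cmp_ngt_r: "f \<in> hom C A B \<Longrightarrow> g \<in> hom C B D \<Longrightarrow> cmp C g (ngt C f) = ngt C (cmp C g f)"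
proof -
  assume a: "f \<in> hom C A B" "g \<in> hom C B D"
  have D: "A \<in> Ob C" using a Src_Ob hom_iff by auto
  have "pls C (cmp C g f) (cmp C g (ngt C f)) = cmp C g (pls C f (ngt C f))"
    using dist_l a ngt_hom by simp
  also have "\<dots> = zer C A D" using pls_ngt cmp_zer_r a D by simp
  finally show ?thesis using neg_unique comp_hom a ngt_hom by blast
qed

lemma epi_from_zero:
  assumes fh: "f \<in> hom C A B"
    and z: "\<And>W u. W \<in> Ob C \<Longrightarrow> u \<in> hom C B W \<Longrightarrow> cmp C u f = zer C A W \<Longrightarrow> u = zer C B W"
  shows "epi C f"
  unfolding epi_def
proof (intro conjI ballI impI)
  show "f \<in> Ar C" using fh hom_iff by simp
  fix W u v assume W: "W \<in> Ob C" and u: "u \<in> hom C (Tgt C f) W" and v: "v \<in> hom C (Tgt C f) W"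
    and e: "cmp C u f = cmp C v f"
  have u': "u \<in> hom C B W" and v': "v \<in> hom C B W" using u v fh hom_iff by auto
  have "cmp C (pls C u (ngt C v)) f = pls C (cmp C u f) (cmp C (ngt C v) f)"
    using dist_r fh u' v' ngt_hom by simp
  also have "\<dots> = pls C (cmp C v f) (ngt C (cmp C v f))" using e cmp_ngt_l fh v' by simp
  also have "\<dots> = zer C A W" using pls_ngt comp_hom fh v' by simp
  finally have "pls C u (ngt C v) = zer C B W" using z W pls_hom ngt_hom u' v' by blast
  then show "u = v" using diff_zero u' v' by blast
qed

lemma mono_from_zero:
  assumes fh: "f \<in> hom C A B"
    and z: "\<And>W u. W \<in> Ob C \<Longrightarrow> u \<in> hom C W A \<Longrightarrow> cmp C f u = zer C W B \<Longrightarrow> u = zer C W A"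
  shows "mono C f"
  unfolding mono_def
proof (intro conjI ballI impI)
  show "f \<in> Ar C" using fh hom_iff by simp
  fix W u v assume W: "W \<in> Ob C" and u: "u \<in> hom C W (Src C f)" and v: "v \<in> hom C W (Src C f)"
    and e: "cmp C f u = cmp C f v"
  have u': "u \<in> hom C W A" and v': "v \<in> hom C W A" using u v fh hom_iff by auto
  have "cmp C f (pls C u (ngt C v)) = pls C (cmp C f u) (cmp C f (ngt C v))"
    using dist_l fh u' v' ngt_hom by simp
  also have "\<dots> = pls C (cmp C f v) (ngt C (cmp C f v))" using e cmp_ngt_r fh v' by simp
  also have "\<dots> = zer C W B" using pls_ngt comp_hom fh v' by simp
  finally have "pls C u (ngt C v) = zer C W A" using z W pls_hom ngt_hom u' v' by blast
  then show "u = v" using diff_zero u' v' by blast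
qed

lemma epiD: "epi C f \<Longrightarrow> f \<in> hom C A B \<Longrightarrow> u \<in> hom C B W \<Longrightarrow> v \<in> hom C B W \<Longrightarrow>
   cmp C u f = cmp C v f \<Longrightarrow> u = v"
  unfolding epi_def using hom_iff Tgt_Ob by metis
lemma monoD: "mono C f \<Longrightarrow> f \<in> hom C A B \<Longrightarrow> u \<in> hom C W A \<Longrightarrow> v \<in> hom C W A \<Longrightarrow>
   cmp C f u = cmp C f v \<Longrightarrow> u = v"
  unfolding mono_def using hom_iff Src_Ob by metis

lemma isoE: "iso C f \<Longrightarrow> f \<in> hom C A B \<Longrightarrow>
  \<exists>g\<in>hom C B A. cmp C g f = idt C A \<and> cmp C f g = idt C B"
  unfolding iso_def using hom_iff by auto

lemma iso_epi: "f \<in> hom C A B \<Longrightarrow> h \<in> hom C B A \<Longrightarrow> cmp C h f = idt C A \<Longrightarrow> epi C f \<Longrightarrow> iso C f"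
proof -
  assume a: "f \<in> hom C A B" "h \<in> hom C B A" "cmp C h f = idt C A" "epi C f"
  have B: "B \<in> Ob C" using a hom_iff Tgt_Ob by auto
  have "cmp C (cmp C f h) f = cmp C (idt C B) f"
    using a assoc[of f h f] hom_iff id_l id_r by auto
  then have "cmp C f h = idt C B" using epiD a comp_hom id_hom B by blast
  moreover have "Src C f = A" "Tgt C f = B" "f \<in> Ar C" using a hom_iff by auto
  ultimately show ?thesis using a unfolding iso_def by (metis)
qed

lemma iso_mono: "f \<in> hom C A B \<Longrightarrow> h \<in> hom C B A \<Longrightarrow> cmp C f h = idt C B \<Longrightarrow> mono C f \<Longrightarrow> iso C f"
proof -
  assume a: "f \<in> hom C A B" "h \<in> hom C B A" "cmp C f h = idt C B" "mono C f"
  have B: "A \<in> Ob C" using a hom_iff Src_Ob by auto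
  have "cmp C f (cmp C h f) = cmp C f (idt C A)"
    using a assoc[of f h f] hom_iff id_l id_r by auto
  then have "cmp C h f = idt C A" using monoD a comp_hom id_hom B by blast
  moreover have "Src C f = A" "Tgt C f = B" "f \<in> Ar C" using a hom_iff by auto
  ultimately show ?thesis using a unfolding iso_def by (metis)
qed

lemma wcokD: "weak_cokernel C a b \<Longrightarrow> a \<in> hom C A B \<Longrightarrow> b \<in> hom C B D \<Longrightarrow> h \<in> hom C B W \<Longrightarrow>
  cmp C h a = zer C A W \<Longrightarrow> \<exists>k\<in>hom C D W. h = cmp C k b"
  unfolding weak_cokernel_def using hom_iff Tgt_Ob by metis
lemma wcok_zero: "weak_cokernel C a b \<Longrightarrow> a \<in> hom C A B \<Longrightarrow> b \<in> hom C B D \<Longrightarrow> cmp C b a = zer C A D"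
proof -
  assume a: "weak_cokernel C a b" "a \<in> hom C A B" "b \<in> hom C B D"
  have D: "D \<in> Ob C" using a hom_iff Tgt_Ob by auto
  have "\<exists>k\<in>hom C D D. b = cmp C k b" using id_hom D id_l a hom_iff by metis
  moreover have "Src C b = B" "Tgt C b = D" "Src C a = A" using a hom_iff by auto
  moreover have "\<forall>W\<in>Ob C. \<forall>h\<in>hom C (Src C b) W.
        cmp C h a = zer C (Src C a) W \<longleftrightarrow> (\<exists>k\<in>hom C (Tgt C b) W. h = cmp C k b)"
    using a(1) unfolding weak_cokernel_def by blast
  ultimately show ?thesis using a D by auto
qed
lemma wkerD: "weak_kernel C g f \<Longrightarrow> f \<in> hom C A B \<Longrightarrow> g \<in> hom C B D \<Longrightarrow> h \<in> hom C W B \<Longrightarrow>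
  cmp C g h = zer C W D \<Longrightarrow> \<exists>k\<in>hom C W A. h = cmp C f k"
  unfolding weak_kernel_def using hom_iff Src_Ob by metis
lemma wker_zero: "weak_kernel C g f \<Longrightarrow> f \<in> hom C A B \<Longrightarrow> g \<in> hom C B D \<Longrightarrow> cmp C g f = zer C A D"
proof -
  assume a: "weak_kernel C g f" "f \<in> hom C A B" "g \<in> hom C B D"
  have D: "A \<in> Ob C" using a hom_iff Src_Ob by auto
  have "\<exists>k\<in>hom C A A. f = cmp C f k" using id_hom D id_r a hom_iff by metis
  moreover have "Src C g = B" "Src C f = A" "Tgt C g = D" using a hom_iff by auto
  moreover have "\<forall>W\<in>Ob C. \<forall>h\<in>hom C W (Src C g).
        cmp C g h = zer C W (Tgt C g) \<longleftrightarrow> (\<exists>k\<in>hom C W (Src C f). h = cmp C f k)"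
    using a(1) unfolding weak_kernel_def by blast
  ultimately show ?thesis using a D by auto
qed

end


theorem mainTheorem10:
  fixes C :: "('o, 'm) catdata" and n :: nat
    and X Y :: "nat \<Rightarrow> 'o" and dX dY f :: "nat \<Rightarrow> 'm"
  assumes nab: "n_abelian C n"
    and obX: "\<forall>i\<le>4. X i \<in> Ob C" and obY: "\<forall>i\<le>4. Y i \<in> Ob C"
    and dXh: "\<forall>i<4. dX i \<in> hom C (X i) (X (Suc i))"
    and dYh: "\<forall>i<4. dY i \<in> hom C (Y i) (Y (Suc i))"
    and fh: "\<forall>i\<le>4. f i \<in> hom C (X i) (Y i)"
    and comm: "\<forall>i<4. cmp C (f (Suc i)) (dX i) = cmp C (dY i) (f i)"
    and iso1: "iso C (f 1)" and iso3: "iso C (f 3)"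
    and epi0: "epi C (f 0)" and mono4: "mono C (f 4)"
    and cond: "(\<forall>i\<in>{1,2,3}. weak_cokernel C (dX (i - 1)) (dX i) \<and> weak_cokernel C (dY (i - 1)) (dY i))
             \<or> (\<forall>i\<in>{0,1,2}. weak_kernel C (dX (Suc i)) (dX i) \<and> weak_kernel C (dY (Suc i)) (dY i))"
  shows "iso C (f 2)"
proof -
  have PA: "is_preadditive C" using nab unfolding n_abelian_def is_additive_def by blast
  have x2: "X 2 \<in> Ob C" and x4: "X 4 \<in> Ob C" and y2: "Y 2 \<in> Ob C" and y0: "Y 0 \<in> Ob C" and y4: "Y 4 \<in> Ob C"
    using obX obY by auto
  have a0: "dX 0 \<in> hom C (X 0) (X 1)" and a1: "dX 1 \<in> hom C (X 1) (X 2)"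
    and a2: "dX 2 \<in> hom C (X 2) (X 3)" and a3: "dX 3 \<in> hom C (X 3) (X 4)"
    using dXh by (auto simp: numeral_eq_Suc)
  have b0: "dY 0 \<in> hom C (Y 0) (Y 1)" and b1: "dY 1 \<in> hom C (Y 1) (Y 2)"
    and b2: "dY 2 \<in> hom C (Y 2) (Y 3)" and b3: "dY 3 \<in> hom C (Y 3) (Y 4)"
    using dYh by (auto simp: numeral_eq_Suc)
  have f0h: "f 0 \<in> hom C (X 0) (Y 0)" and f1h: "f 1 \<in> hom C (X 1) (Y 1)"
    and f2h: "f 2 \<in> hom C (X 2) (Y 2)" and f3h: "f 3 \<in> hom C (X 3) (Y 3)"
    and f4h: "f 4 \<in> hom C (X 4) (Y 4)"
    using fh by auto
  have c0: "cmp C (f 1) (dX 0) = cmp C (dY 0) (f 0)"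
    and c1: "cmp C (f 2) (dX 1) = cmp C (dY 1) (f 1)"
    and c2: "cmp C (f 3) (dX 2) = cmp C (dY 2) (f 2)"
    and c3: "cmp C (f 4) (dX 3) = cmp C (dY 3) (f 3)"
    using comm by (auto simp: numeral_eq_Suc)
  obtain g1 where g1: "g1 \<in> hom C (Y 1) (X 1)" "cmp C g1 (f 1) = idt C (X 1)" "cmp C (f 1) g1 = idt C (Y 1)"
    using isoE[OF PA iso1 f1h] by blast
  obtain g3 where g3: "g3 \<in> hom C (Y 3) (X 3)" "cmp C g3 (f 3) = idt C (X 3)" "cmp C (f 3) g3 = idt C (Y 3)"
    using isoE[OF PA iso3 f3h] by blast
  show ?thesis using cond
  proof
    assume ci: "\<forall>i\<in>{1,2,3}. weak_cokernel C (dX (i - 1)) (dX i) \<and> weak_cokernel C (dY (i - 1)) (dY i)"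
    have wX1: "weak_cokernel C (dX 0) (dX 1)" and wX2: "weak_cokernel C (dX 1) (dX 2)"
      and wX3: "weak_cokernel C (dX 2) (dX 3)" and wY1: "weak_cokernel C (dY 0) (dY 1)"
      and wY2: "weak_cokernel C (dY 1) (dY 2)" and wY3: "weak_cokernel C (dY 2) (dY 3)"
      using ci by auto
    have epi2: "epi C (f 2)"
    proof (rule epi_from_zero[OF PA f2h])
      fix W u assume W: "W \<in> Ob C" and u: "u \<in> hom C (Y 2) W" and uz: "cmp C u (f 2) = zer C (X 2) W"
      have s1: "cmp C (cmp C u (dY 1)) (f 1) = zer C (X 1) W"
      proof -
        have "cmp C (cmp C u (dY 1)) (f 1) = cmp C u (cmp C (dY 1) (f 1))" using assoc_hom[OF PA f1h b1 u] .
        also have "\<dots> = cmp C u (cmp C (f 2) (dX 1))" using c1 by simp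
        also have "\<dots> = cmp C (cmp C u (f 2)) (dX 1)" using assoc_hom[OF PA a1 f2h u] by simp
        also have "\<dots> = zer C (X 1) W" using uz cmp_zer_l[OF PA a1 W] by simp
        finally show ?thesis .
      qed
      have ub: "cmp C u (dY 1) \<in> hom C (Y 1) W" using comp_hom[OF PA b1 u] .
      have s2: "cmp C u (dY 1) = zer C (Y 1) W"
      proof -
        have "cmp C u (dY 1) = cmp C (cmp C u (dY 1)) (cmp C (f 1) g1)"
          using g1 id_r[OF PA] ub hom_iff[OF PA] by simp
        also have "\<dots> = cmp C (cmp C (cmp C u (dY 1)) (f 1)) g1" using assoc_hom[OF PA g1(1) f1h ub] by simp
        also have "\<dots> = zer C (Y 1) W" using s1 cmp_zer_l[OF PA g1(1) W] by simp
        finally show ?thesis .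
      qed
      obtain k where k: "k \<in> hom C (Y 3) W" "u = cmp C k (dY 2)" using wcokD[OF PA wY2 b1 b2 u s2] by blast
      have kf: "cmp C k (f 3) \<in> hom C (X 3) W" using comp_hom[OF PA f3h k(1)] .
      have s3: "cmp C (cmp C k (f 3)) (dX 2) = zer C (X 2) W"
      proof -
        have "cmp C (cmp C k (f 3)) (dX 2) = cmp C k (cmp C (f 3) (dX 2))" using assoc_hom[OF PA a2 f3h k(1)] .
        also have "\<dots> = cmp C k (cmp C (dY 2) (f 2))" using c2 by simp
        also have "\<dots> = cmp C (cmp C k (dY 2)) (f 2)" using assoc_hom[OF PA f2h b2 k(1)] by simp
        also have "\<dots> = zer C (X 2) W" using uz k by simp
        finally show ?thesis .
      qed
      obtain m where m: "m \<in> hom C (X 4) W" "cmp C k (f 3) = cmp C m (dX 3)"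
        using wcokD[OF PA wX3 a2 a3 kf s3] by blast
      have gb: "cmp C g3 (dY 2) \<in> hom C (Y 2) (X 3)" using comp_hom[OF PA b2 g3(1)] .
      define t where "t = cmp C (dX 3) (cmp C g3 (dY 2))"
      have th: "t \<in> hom C (Y 2) (X 4)" using comp_hom[OF PA gb a3] t_def by simp
      have "cmp C (f 4) t = cmp C (cmp C (f 4) (dX 3)) (cmp C g3 (dY 2))"
        using assoc_hom[OF PA gb a3 f4h] t_def by simp
      also have "\<dots> = cmp C (cmp C (dY 3) (f 3)) (cmp C g3 (dY 2))" using c3 by simp
      also have "\<dots> = cmp C (dY 3) (cmp C (f 3) (cmp C g3 (dY 2)))" using assoc_hom[OF PA gb f3h b3] .
      also have "cmp C (f 3) (cmp C g3 (dY 2)) = cmp C (cmp C (f 3) g3) (dY 2)"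
        using assoc_hom[OF PA b2 g3(1) f3h] by simp
      also have "\<dots> = dY 2" using g3 id_l[OF PA] b2 hom_iff[OF PA] by simp
      also have "cmp C (dY 3) (dY 2) = zer C (Y 2) (Y 4)" using wcok_zero[OF PA wY3 b2 b3] .
      also have "\<dots> = cmp C (f 4) (zer C (Y 2) (X 4))" using cmp_zer_r[OF PA f4h y2] by simp
      finally have tz4: "t = zer C (Y 2) (X 4)" using monoD[OF PA mono4 f4h th zer_hom[OF PA y2 x4]] by blast
      have "u = cmp C (cmp C k (cmp C (f 3) g3)) (dY 2)" using k g3 id_r[OF PA] hom_iff[OF PA] by simp
      also have "\<dots> = cmp C (cmp C (cmp C k (f 3)) g3) (dY 2)" using assoc_hom[OF PA g3(1) f3h k(1)] by simp
      also have "\<dots> = cmp C (cmp C (cmp C m (dX 3)) g3) (dY 2)" using m by simp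
      also have "\<dots> = cmp C (cmp C m (dX 3)) (cmp C g3 (dY 2))"
        using assoc_hom[OF PA b2 g3(1) comp_hom[OF PA a3 m(1)]] .
      also have "\<dots> = cmp C m t" using assoc_hom[OF PA gb a3 m(1)] t_def by simp
      also have "\<dots> = zer C (Y 2) W" using tz4 cmp_zer_r[OF PA m(1) y2] by simp
      finally show "u = zer C (Y 2) W" .
    qed
    define y1 where "y1 = cmp C (dX 1) g1"
    have y1h: "y1 \<in> hom C (Y 1) (X 2)" using comp_hom[OF PA g1(1) a1] y1_def by simp
    have y1f: "cmp C y1 (f 1) = dX 1"
      using assoc_hom[OF PA f1h g1(1) a1] y1_def g1 id_r[OF PA] a1 hom_iff[OF PA] by simp
    have y1b: "cmp C y1 (dY 0) \<in> hom C (Y 0) (X 2)" using comp_hom[OF PA b0 y1h] .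
    have "cmp C (cmp C y1 (dY 0)) (f 0) = cmp C y1 (cmp C (dY 0) (f 0))" using assoc_hom[OF PA f0h b0 y1h] .
    also have "\<dots> = cmp C (cmp C y1 (f 1)) (dX 0)" using c0 assoc_hom[OF PA a0 f1h y1h] by simp
    also have "\<dots> = zer C (X 0) (X 2)" using y1f wcok_zero[OF PA wX1 a0 a1] by simp
    also have "\<dots> = cmp C (zer C (Y 0) (X 2)) (f 0)" using cmp_zer_l[OF PA f0h x2] by simp
    finally have "cmp C y1 (dY 0) = zer C (Y 0) (X 2)"
      using epiD[OF PA epi0 f0h y1b zer_hom[OF PA y0 x2]] by blast
    then obtain y2 where y2h: "y2 \<in> hom C (Y 2) (X 2)" "y1 = cmp C y2 (dY 1)"
      using wcokD[OF PA wY1 b0 b1 y1h] by blast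
    define q where "q = cmp C y2 (f 2)"
    have qh: "q \<in> hom C (X 2) (X 2)" using comp_hom[OF PA f2h y2h(1)] q_def by simp
    have idh: "idt C (X 2) \<in> hom C (X 2) (X 2)" using id_hom[OF PA x2] .
    define d where "d = pls C (idt C (X 2)) (ngt C q)"
    have dh: "d \<in> hom C (X 2) (X 2)" using pls_hom[OF PA idh ngt_hom[OF PA qh]] d_def by simp
    have qa: "cmp C q (dX 1) = dX 1"
    proof -
      have "cmp C q (dX 1) = cmp C y2 (cmp C (f 2) (dX 1))" using assoc_hom[OF PA a1 f2h y2h(1)] q_def by simp
      also have "\<dots> = cmp C y1 (f 1)" using c1 assoc_hom[OF PA f1h b1 y2h(1)] y2h by simp
      finally show ?thesis using y1f by simp
    qed
    have "cmp C d (dX 1) = pls C (cmp C (idt C (X 2)) (dX 1)) (cmp C (ngt C q) (dX 1))"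
      using dist_r[OF PA a1 idh ngt_hom[OF PA qh]] d_def by simp
    also have "\<dots> = pls C (dX 1) (ngt C (dX 1))"
      using id_l[OF PA] a1 hom_iff[OF PA] cmp_ngt_l[OF PA a1 qh] qa by simp
    also have "\<dots> = zer C (X 1) (X 2)" using pls_ngt[OF PA a1] .
    finally obtain z where z: "z \<in> hom C (X 3) (X 2)" "d = cmp C z (dX 2)"
      using wcokD[OF PA wX2 a1 a2 dh] by blast
    define z' where "z' = cmp C z g3"
    have z'h: "z' \<in> hom C (Y 3) (X 2)" using comp_hom[OF PA g3(1) z(1)] z'_def by simp
    have zb: "cmp C z' (dY 2) \<in> hom C (Y 2) (X 2)" using comp_hom[OF PA b2 z'h] .
    have "cmp C (cmp C z' (dY 2)) (f 2) = cmp C z' (cmp C (f 3) (dX 2))"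
      using assoc_hom[OF PA f2h b2 z'h] c2 by simp
    also have "\<dots> = cmp C (cmp C z' (f 3)) (dX 2)" using assoc_hom[OF PA a2 f3h z'h] by simp
    also have "cmp C z' (f 3) = z"
      using assoc_hom[OF PA f3h g3(1) z(1)] z'_def g3 id_r[OF PA] z(1) hom_iff[OF PA] by simp
    finally have zd: "cmp C (cmp C z' (dY 2)) (f 2) = d" using z by simp
    define h where "h = pls C (cmp C z' (dY 2)) y2"
    have hh: "h \<in> hom C (Y 2) (X 2)" using pls_hom[OF PA zb y2h(1)] h_def by simp
    have "cmp C h (f 2) = pls C d q" using dist_r[OF PA f2h zb y2h(1)] h_def zd q_def by simp
    also have "\<dots> = idt C (X 2)" using pls_ngt_cancel[OF PA idh qh] d_def by simp
    finally show ?thesis using iso_epi[OF PA f2h hh _ epi2] by blast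
  next
    assume cii: "\<forall>i\<in>{0,1,2}. weak_kernel C (dX (Suc i)) (dX i) \<and> weak_kernel C (dY (Suc i)) (dY i)"
    have wX1: "weak_kernel C (dX 1) (dX 0)" and wX2: "weak_kernel C (dX 2) (dX 1)"
      and wX3: "weak_kernel C (dX 3) (dX 2)" and wY1: "weak_kernel C (dY 1) (dY 0)"
      and wY2: "weak_kernel C (dY 2) (dY 1)" and wY3: "weak_kernel C (dY 3) (dY 2)"
      using cii by (auto simp: numeral_eq_Suc)
    have mono2: "mono C (f 2)"
    proof (rule mono_from_zero[OF PA f2h])
      fix W u assume W: "W \<in> Ob C" and u: "u \<in> hom C W (X 2)" and uz: "cmp C (f 2) u = zer C W (Y 2)"
      have au: "cmp C (dX 2) u \<in> hom C W (X 3)" using comp_hom[OF PA u a2] .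
      have s1: "cmp C (f 3) (cmp C (dX 2) u) = zer C W (Y 3)"
      proof -
        have "cmp C (f 3) (cmp C (dX 2) u) = cmp C (cmp C (f 3) (dX 2)) u" using assoc_hom[OF PA u a2 f3h] by simp
        also have "\<dots> = cmp C (dY 2) (cmp C (f 2) u)" using c2 assoc_hom[OF PA u f2h b2] by simp
        also have "\<dots> = zer C W (Y 3)" using uz cmp_zer_r[OF PA b2 W] by simp
        finally show ?thesis .
      qed
      have s2: "cmp C (dX 2) u = zer C W (X 3)"
      proof -
        have "cmp C (dX 2) u = cmp C (cmp C g3 (f 3)) (cmp C (dX 2) u)"
          using g3 id_l[OF PA] au hom_iff[OF PA] by simp
        also have "\<dots> = cmp C g3 (cmp C (f 3) (cmp C (dX 2) u))" using assoc_hom[OF PA au f3h g3(1)] .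
        also have "\<dots> = zer C W (X 3)" using s1 cmp_zer_r[OF PA g3(1) W] by simp
        finally show ?thesis .
      qed
      obtain k where k: "k \<in> hom C W (X 1)" "u = cmp C (dX 1) k" using wkerD[OF PA wX2 a1 a2 u s2] by blast
      have fk: "cmp C (f 1) k \<in> hom C W (Y 1)" using comp_hom[OF PA k(1) f1h] .
      have s3: "cmp C (dY 1) (cmp C (f 1) k) = zer C W (Y 2)"
      proof -
        have "cmp C (dY 1) (cmp C (f 1) k) = cmp C (cmp C (dY 1) (f 1)) k" using assoc_hom[OF PA k(1) f1h b1] by simp
        also have "\<dots> = cmp C (f 2) (cmp C (dX 1) k)" using c1 assoc_hom[OF PA k(1) a1 f2h] by simp
        also have "\<dots> = zer C W (Y 2)" using uz k by simp
        finally show ?thesis .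
      qed
      obtain m where m: "m \<in> hom C W (Y 0)" "cmp C (f 1) k = cmp C (dY 0) m"
        using wkerD[OF PA wY1 b0 b1 fk s3] by blast
      have ag: "cmp C (dX 1) g1 \<in> hom C (Y 1) (X 2)" using comp_hom[OF PA g1(1) a1] .
      define t where "t = cmp C (cmp C (dX 1) g1) (dY 0)"
      have th: "t \<in> hom C (Y 0) (X 2)" using comp_hom[OF PA b0 ag] t_def by simp
      have agf: "cmp C (cmp C (dX 1) g1) (f 1) = dX 1"
        using assoc_hom[OF PA f1h g1(1) a1] g1 id_r[OF PA] a1 hom_iff[OF PA] by simp
      have "cmp C t (f 0) = cmp C (cmp C (dX 1) g1) (cmp C (dY 0) (f 0))"
        using assoc_hom[OF PA f0h b0 ag] t_def by simp
      also have "\<dots> = cmp C (cmp C (cmp C (dX 1) g1) (f 1)) (dX 0)"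
        using c0 assoc_hom[OF PA a0 f1h ag] by simp
      also have "\<dots> = zer C (X 0) (X 2)" using agf wker_zero[OF PA wX1 a0 a1] by simp
      also have "\<dots> = cmp C (zer C (Y 0) (X 2)) (f 0)" using cmp_zer_l[OF PA f0h x2] by simp
      finally have tz: "t = zer C (Y 0) (X 2)"
        using epiD[OF PA epi0 f0h th zer_hom[OF PA y0 x2]] by blast
      have "u = cmp C (dX 1) (cmp C (cmp C g1 (f 1)) k)" using k g1 id_l[OF PA] hom_iff[OF PA] by simp
      also have "\<dots> = cmp C (dX 1) (cmp C g1 (cmp C (dY 0) m))"
        using assoc_hom[OF PA k(1) f1h g1(1)] m by simp
      also have "\<dots> = cmp C (cmp C (dX 1) g1) (cmp C (dY 0) m)"
        using assoc_hom[OF PA comp_hom[OF PA m(1) b0] g1(1) a1] by simp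
      also have "\<dots> = cmp C t m" using assoc_hom[OF PA m(1) b0 ag] t_def by simp
      also have "\<dots> = zer C W (X 2)" using tz cmp_zer_l[OF PA m(1) x2] by simp
      finally show "u = zer C W (X 2)" .
    qed
    define y3 where "y3 = cmp C g3 (dY 2)"
    have y3h: "y3 \<in> hom C (Y 2) (X 3)" using comp_hom[OF PA b2 g3(1)] y3_def by simp
    have fy3: "cmp C (f 3) y3 = dY 2"
      using assoc_hom[OF PA b2 g3(1) f3h] y3_def g3 id_l[OF PA] b2 hom_iff[OF PA] by simp
    have ay: "cmp C (dX 3) y3 \<in> hom C (Y 2) (X 4)" using comp_hom[OF PA y3h a3] .
    have "cmp C (f 4) (cmp C (dX 3) y3) = cmp C (cmp C (f 4) (dX 3)) y3" using assoc_hom[OF PA y3h a3 f4h] by simp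
    also have "\<dots> = cmp C (dY 3) (cmp C (f 3) y3)" using c3 assoc_hom[OF PA y3h f3h b3] by simp
    also have "\<dots> = zer C (Y 2) (Y 4)" using fy3 wker_zero[OF PA wY3 b2 b3] by simp
    also have "\<dots> = cmp C (f 4) (zer C (Y 2) (X 4))" using cmp_zer_r[OF PA f4h y2] by simp
    finally have "cmp C (dX 3) y3 = zer C (Y 2) (X 4)"
      using monoD[OF PA mono4 f4h ay zer_hom[OF PA y2 x4]] by blast
    then obtain y2 where y2h: "y2 \<in> hom C (Y 2) (X 2)" "y3 = cmp C (dX 2) y2"
      using wkerD[OF PA wX3 a2 a3 y3h] by blast
    define q where "q = cmp C (f 2) y2"
    have qh: "q \<in> hom C (Y 2) (Y 2)" using comp_hom[OF PA y2h(1) f2h] q_def by simp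
    have idh: "idt C (Y 2) \<in> hom C (Y 2) (Y 2)" using id_hom[OF PA y2] .
    define d where "d = pls C (idt C (Y 2)) (ngt C q)"
    have dh: "d \<in> hom C (Y 2) (Y 2)" using pls_hom[OF PA idh ngt_hom[OF PA qh]] d_def by simp
    have bq: "cmp C (dY 2) q = dY 2"
    proof -
      have "cmp C (dY 2) q = cmp C (cmp C (dY 2) (f 2)) y2" using assoc_hom[OF PA y2h(1) f2h b2] q_def by simp
      also have "\<dots> = cmp C (f 3) y3" using c2 assoc_hom[OF PA y2h(1) a2 f3h] y2h by simp
      finally show ?thesis using fy3 by simp
    qed
    have "cmp C (dY 2) d = pls C (cmp C (dY 2) (idt C (Y 2))) (cmp C (dY 2) (ngt C q))"
      using dist_l[OF PA idh ngt_hom[OF PA qh] b2] d_def by simp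
    also have "\<dots> = pls C (dY 2) (ngt C (dY 2))"
      using id_r[OF PA] b2 hom_iff[OF PA] cmp_ngt_r[OF PA qh b2] bq by simp
    also have "\<dots> = zer C (Y 2) (Y 3)" using pls_ngt[OF PA b2] .
    finally obtain z where z: "z \<in> hom C (Y 2) (Y 1)" "d = cmp C (dY 1) z"
      using wkerD[OF PA wY2 b1 b2 dh] by blast
    define z' where "z' = cmp C g1 z"
    have z'h: "z' \<in> hom C (Y 2) (X 1)" using comp_hom[OF PA z(1) g1(1)] z'_def by simp
    have az: "cmp C (dX 1) z' \<in> hom C (Y 2) (X 2)" using comp_hom[OF PA z'h a1] .
    have "cmp C (f 2) (cmp C (dX 1) z') = cmp C (cmp C (dY 1) (f 1)) z'"
      using assoc_hom[OF PA z'h a1 f2h] c1 by simp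
    also have "\<dots> = cmp C (dY 1) (cmp C (f 1) z')" using assoc_hom[OF PA z'h f1h b1] .
    also have "cmp C (f 1) z' = z"
      using assoc_hom[OF PA z(1) g1(1) f1h] z'_def g1 id_l[OF PA] z(1) hom_iff[OF PA] by simp
    finally have zd: "cmp C (f 2) (cmp C (dX 1) z') = d" using z by simp
    define h where "h = pls C (cmp C (dX 1) z') y2"
    have hh: "h \<in> hom C (Y 2) (X 2)" using pls_hom[OF PA az y2h(1)] h_def by simp
    have "cmp C (f 2) h = pls C d q" using dist_l[OF PA az y2h(1) f2h] h_def zd q_def by simp
    also have "\<dots> = idt C (Y 2)" using pls_ngt_cancel[OF PA idh qh] d_def by simp
    finally show ?thesis using iso_mono[OF PA f2h hh _ mono2] by blast
  qed
qed
end
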